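(* Let $e$ be a finite set with $|e|\ge 2$, $\gamma_e:e\to\mathbb{R}_{+}$, $\gamma_e(\mathcal{S})=\sum_{v\in\mathcal{S}}\gamma_e(v)$, and let $g_e:[0,\gamma_e(e)]\to\mathbb{R}_{\ge0}$ be concave with $g_e(0)=g_e(\gamma_e(e))=0$. Let $w_e(\mathcal{S})=g_e(\gamma_e(\mathcal{S}))$ for $\mathcal{S}\subseteq e$. Define $\mathcal{Q}_a=\{\gamma_e(\mathcal{S}):\emptyset\ne\mathcal{S}\subsetneq e\}$ and $\mathcal{Q}_s=\{\gamma_e(\mathcal{S}):\mathcal{S}\subseteq e,\ 0<\gamma_e(\mathcal{S})\le\gamma_e(e)/2\}$. Then: (i) $w_e$ is graph reducible. More precisely, with $r=|\mathcal{Q}_a|$ and $b_1<\dots<b_r$ the elements of $\mathcal{Q}_a$, there exist nonnegative coefficients $a_1,\dots,a_r$ such that for all $\mathcal{S}\subseteq e$, $$w_e(\mathcal{S})=\sum_{i=1}^r a_i\min\{(\gamma_e(e)-b_i)\gamma_e(\mathcal{S}),\ b_i\gamma_e(e\setminus\mathcal{S})\},$$ so that $w_e$ is the gadget splitting function of the graph obtained as the union, over $i=1,\dots,r$, of asymmetric EDVWs-based gadgets with parameters $(a,b)=(a_i(\gamma_e(e)-b_i),\ a_ib_i)$, each with its own auxiliary vertex and all sharing the vertex set $e$ (edges of coefficient zero may be dropped). In particular $w_e$ is the gadget splitting function of a combination of at most $|\mathcal{Q}_a|$ asymmetric EDVWs-based gadgets. (ii) If in addition $g_e$ is symmetric, i.e.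 $g_e(x)=g_e(\gamma_e(e)-x)$ for all $x$, then with $r=|\mathcal{Q}_s|$ and $b_1<\dots<b_r$ the elements of $\mathcal{Q}_s$, there exist nonnegative coefficients $a_1,\dots,a_r$ such that for all $\mathcal{S}\subseteq e$, $$w_e(\mathcal{S})=\sum_{i=1}^r a_i\min\{\gamma_e(\mathcal{S}),\ \gamma_e(e\setminus\mathcal{S}),\ b_i\},$$ so that $w_e$ is the gadget splitting function of the union over $i$ of symmetric EDVWs-based gadgets with parameter $b=b_i$ and all edge weights multiplied by $a_i$, each with its own pair of auxiliary vertices and all sharing the vertex set $e$; i.e. a combination of at most $|\mathcal{Q}_s|$ symmetric EDVWs-based gadgets.
   Context: For a weighted, possibly directed graph $\mathcal{G}$ with vertex set $\mathcal{V}$ and weights $W_{uv}$ (weight of edge from $u$ to $v$), $\mathrm{cut}_{\mathcal{G}}(\mathcal{T})=\sum_{u\in\mathcal{T},v\in\mathcal{V}\setminus\mathcal{T}}W_{uv}$. A gadget for a hyperedge $e$ is a weighted, possibly directed graph $\mathcal{G}_e$ with vertex set $\mathcal{V}'=e\cup\hat{\mathcal{V}}$, $\hat{\mathcal{V}}$ a set of auxiliary vertices disjoint from $e$; its gadget splitting function is $\hat w_e(\mathcal{S})=\min_{\mathcal{T}\subseteq\mathcal{V}',\,\mathcal{T}\cap e=\mathcal{S}}\mathrm{cut}_{\mathcal{G}_e}(\mathcal{T})$. A splitting function is graph reducible if it equals some gadget splitting function. The symmetric EDVWs-based gadget with parameter $b>0$ is the directed graph on $e\cup\{e',e''\}$ with,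 for each $v\in e$, an edge $v\to e'$ of weight $\gamma_e(v)$ and an edge $e''\to v$ of weight $\gamma_e(v)$, plus an edge $e'\to e''$ of weight $b$; its gadget splitting function is $\min\{\gamma_e(\mathcal{S}),\gamma_e(e\setminus\mathcal{S}),b\}$. The asymmetric EDVWs-based gadget with parameters $a,b\ge0$ is the directed graph on $e\cup\{v_e\}$ with, for each $v\in e$, an edge $v\to v_e$ of weight $a\gamma_e(v)$ and an edge $v_e\to v$ of weight $b\gamma_e(v)$; its gadget splitting function is $\min\{a\gamma_e(\mathcal{S}),b\gamma_e(e\setminus\mathcal{S})\}$. *)

theory Defs
  imports "HOL-Analysis.Analysis"
begin

text \<open>Cut of a vertex subset T in a weighted directed graph on vertex set V with
  weights W u v (weight of the edge from u to v; 0 means no edge).\<close>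
definition cut_val :: "'v set \<Rightarrow> ('v \<Rightarrow> 'v \<Rightarrow> real) \<Rightarrow> 'v set \<Rightarrow> real" where
  "cut_val V W T = (\<Sum>u\<in>T. \<Sum>v\<in>V - T. W u v)"

text \<open>Gadget for hyperedge e: vertex set is (Inl ` e) union (Inr ` Aux), auxiliary vertices
  tagged with Inr (hence disjoint from e). Gadget splitting function of a subset S of e.\<close>
definition gadget_split ::
  "'a set \<Rightarrow> 'x set \<Rightarrow> (('a + 'x) \<Rightarrow> ('a + 'x) \<Rightarrow> real) \<Rightarrow> 'a set \<Rightarrow> real" where
  "gadget_split e Aux W S =
     Min {cut_val (Inl ` e \<union> Inr ` Aux) W T | T.
            T \<subseteq> Inl ` e \<union> Inr ` Aux \<and> {v \<in> e. Inl v \<in> T} = S}"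

definition graph_reducible :: "'a set \<Rightarrow> ('a set \<Rightarrow> real) \<Rightarrow> bool" where
  "graph_reducible e w \<longleftrightarrow>
     (\<exists>(Aux :: nat set) W. finite Aux \<and> (\<forall>u v. 0 \<le> W u v) \<and>
        (\<forall>S. S \<subseteq> e \<longrightarrow> w S = gadget_split e Aux W S))"

text \<open>Union over b in an index set of asymmetric EDVWs-based gadgets with parameters
  (alpha b, beta b); the auxiliary vertex of the b-th gadget is Inr b.\<close>
definition asym_union_W ::
  "('a \<Rightarrow> real) \<Rightarrow> (real \<Rightarrow> real) \<Rightarrow> (real \<Rightarrow> real) \<Rightarrow> ('a + real) \<Rightarrow> ('a + real) \<Rightarrow> real" where
  "asym_union_W \<gamma> \<alpha> \<beta> x y =
     (case (x, y) of (Inl v, Inr b) \<Rightarrow> \<alpha> b * \<gamma> v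
                   | (Inr b, Inl v) \<Rightarrow> \<beta> b * \<gamma> v
                   | _ \<Rightarrow> 0)"

text \<open>Union over b in an index set of symmetric EDVWs-based gadgets with parameter b, all
  edge weights multiplied by c b; auxiliary vertices e'_b = Inr (b, False), e''_b = Inr (b, True).\<close>
definition sym_union_W ::
  "('a \<Rightarrow> real) \<Rightarrow> (real \<Rightarrow> real) \<Rightarrow> ('a + real \<times> bool) \<Rightarrow> ('a + real \<times> bool) \<Rightarrow> real" where
  "sym_union_W \<gamma> c x y =
     (case (x, y) of (Inl v, Inr (b, False)) \<Rightarrow> c b * \<gamma> v
                   | (Inr (b, True), Inl v) \<Rightarrow> c b * \<gamma> v
                   | (Inr (b, False), Inr (b', True)) \<Rightarrow> (if b = b' then c b * b else 0)
                   | _ \<Rightarrow> 0)"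

definition Q_a :: "'a set \<Rightarrow> ('a \<Rightarrow> real) \<Rightarrow> real set" where
  "Q_a e \<gamma> = {sum \<gamma> S | S. S \<noteq> {} \<and> S \<subset> e}"

definition Q_s :: "'a set \<Rightarrow> ('a \<Rightarrow> real) \<Rightarrow> real set" where
  "Q_s e \<gamma> = {sum \<gamma> S | S. S \<subseteq> e \<and> 0 < sum \<gamma> S \<and> sum \<gamma> S \<le> sum \<gamma> e / 2}"

end

theory Submission
  imports Defs
begin


lemma core:
  fixes t f s :: "nat \<Rightarrow> real"
  assumes mono: "\<And>i j. i < j \<Longrightarrow> j \<le> n \<Longrightarrow> t i < t j"
    and t0: "t 0 = 0" and f0: "f 0 = 0"
    and slope: "\<And>j. 1 \<le> j \<Longrightarrow> j \<le> n \<Longrightarrow> f j - f (j-1) = s j * (t j - t (j-1))"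
  shows "k \<le> n \<Longrightarrow> (\<Sum>j\<in>{1..n}. (s j - s (Suc j)) * min (t k) (t j)) = f k - s (Suc n) * t k"
proof (induction k)
  case 0
  have "\<And>j. j \<in> {1..n} \<Longrightarrow> min (t 0) (t j) = 0"
    proof - fix j assume "j \<in> {1..n}" then have "0 < t j" using mono[of 0 j] t0 by auto then show "min (t 0) (t j) = 0" using t0 by simp qed
  then show ?case using f0 t0 by simp
next
  case (Suc k)
  have kn: "k < n" using Suc.prems by simp
  have lt: "t k < t (Suc k)" using mono[of k "Suc k"] Suc.prems by simp
  have d: "\<And>j. j \<in> {1..n} \<Longrightarrow> (s j - s (Suc j)) * min (t (Suc k)) (t j)
      = (s j - s (Suc j)) * min (t k) (t j) + (if j \<in> {Suc k..n} then (s j - s (Suc j)) * (t (Suc k) - t k) else 0)"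
  proof -
    fix j assume j: "j \<in> {1..n}"
    show "?thesis j"
    proof (cases "Suc k \<le> j")
      case True
      then have "t (Suc k) \<le> t j" using mono[of "Suc k" j] j by (cases "Suc k = j") auto
      moreover have "t k \<le> t j" using mono[of k j] j True by auto
      ultimately show ?thesis using True j by (simp add: min_def algebra_simps)
    next
      case False
      then have "t j \<le> t k" using mono[of j k] kn by (cases "j = k") auto
      moreover have "t j \<le> t (Suc k)" using \<open>t j \<le> t k\<close> lt by simp
      ultimately show ?thesis using False by (simp add: min_def)
    qed
  qed
  have "(\<Sum>j\<in>{1..n}. (s j - s (Suc j)) * min (t (Suc k)) (t j))
      = (\<Sum>j\<in>{1..n}. (s j - s (Suc j)) * min (t k) (t j))
        + (\<Sum>j\<in>{1..n}. (if j \<in> {Suc k..n} then (s j - s (Suc j)) * (t (Suc k) - t k) else 0))"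
    using d by (simp add: sum.distrib)
  also have "(\<Sum>j\<in>{1..n}. (if j \<in> {Suc k..n} then (s j - s (Suc j)) * (t (Suc k) - t k) else 0))
     = (\<Sum>j\<in>{Suc k..n}. (s j - s (Suc j)) * (t (Suc k) - t k))"
    by (rule sum.mono_neutral_cong_right) auto
  also have "\<dots> = (\<Sum>j\<in>{Suc k..n}. (s j - s (Suc j))) * (t (Suc k) - t k)"
    by (simp add: sum_distrib_right)
  also have "(\<Sum>j\<in>{Suc k..n}. (s j - s (Suc j))) = - (\<Sum>j\<in>{Suc k..n}. (s (Suc j) - s j))"
    by (simp add: sum_negf[symmetric])
  also have "(\<Sum>j\<in>{Suc k..n}. (s (Suc j) - s j)) = s (Suc n) - s (Suc k)"
    using kn by (intro sum_Suc_diff) simp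
  finally show ?case
    using Suc.IH kn slope[of "Suc k"] Suc.prems by (simp add: algebra_simps)
qed



definition asymW :: "('a \<Rightarrow> real) \<Rightarrow> ('x \<Rightarrow> real) \<Rightarrow> ('x \<Rightarrow> real) \<Rightarrow> ('a + 'x) \<Rightarrow> ('a + 'x) \<Rightarrow> real" where
  "asymW \<gamma> \<alpha> \<beta> x y =
     (case (x, y) of (Inl v, Inr b) \<Rightarrow> \<alpha> b * \<gamma> v
                   | (Inr b, Inl v) \<Rightarrow> \<beta> b * \<gamma> v
                   | _ \<Rightarrow> 0)"

lemma asymW_simps [simp]:
  "asymW \<gamma> \<alpha> \<beta> (Inl a) (Inl b) = 0" "asymW \<gamma> \<alpha> \<beta> (Inl a) (Inr x) = \<alpha> x * \<gamma> a"
  "asymW \<gamma> \<alpha> \<beta> (Inr x) (Inl a) = \<beta> x * \<gamma> a" "asymW \<gamma> \<alpha> \<beta> (Inr x) (Inr y) = 0"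
  by (simp_all add: asymW_def)

lemma cut_val_alt:
  assumes "finite V" "T \<subseteq> V"
  shows "cut_val V W T = (\<Sum>u\<in>V. \<Sum>v\<in>V. if u \<in> T \<and> v \<notin> T then W u v else 0)"
proof -
  have "cut_val V W T = (\<Sum>u\<in>T. \<Sum>v\<in>V. if u \<in> T \<and> v \<notin> T then W u v else 0)"
    unfolding cut_val_def
  proof (rule sum.cong[OF refl])
    fix u assume "u \<in> T"
    show "sum (W u) (V - T) = (\<Sum>v\<in>V. if u \<in> T \<and> v \<notin> T then W u v else 0)"
      by (rule sum.mono_neutral_cong_left) (use assms \<open>u \<in> T\<close> in auto)
  qed
  also have "\<dots> = (\<Sum>u\<in>V. \<Sum>v\<in>V. if u \<in> T \<and> v \<notin> T then W u v else 0)"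
    by (rule sum.mono_neutral_cong_left) (use assms in auto)
  finally show ?thesis .
qed

lemma sum_plus_set:
  assumes "finite A" "finite B"
  shows "(\<Sum>u\<in>Inl ` A \<union> Inr ` B. F u) = (\<Sum>a\<in>A. F (Inl a)) + (\<Sum>b\<in>B. F (Inr b))"
  using assms by (subst sum.union_disjoint) (auto simp: sum.reindex)

lemma gadget_Min:
  assumes fin: "finite e" "finite X"
    and lb: "\<And>T. T \<subseteq> Inl ` e \<union> Inr ` X \<Longrightarrow> {v \<in> e. Inl v \<in> T} = S \<Longrightarrow> m \<le> cut_val (Inl ` e \<union> Inr ` X) W T"
    and T0: "T0 \<subseteq> Inl ` e \<union> Inr ` X" "{v \<in> e. Inl v \<in> T0} = S" "cut_val (Inl ` e \<union> Inr ` X) W T0 = m"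
  shows "gadget_split e X W S = m"
  unfolding gadget_split_def
proof (rule Min_eqI)
  have "{cut_val (Inl ` e \<union> Inr ` X) W T |T. T \<subseteq> Inl ` e \<union> Inr ` X \<and> {v \<in> e. Inl v \<in> T} = S}
     \<subseteq> cut_val (Inl ` e \<union> Inr ` X) W ` Pow (Inl ` e \<union> Inr ` X)" by auto
  then show "finite {cut_val (Inl ` e \<union> Inr ` X) W T |T. T \<subseteq> Inl ` e \<union> Inr ` X \<and> {v \<in> e. Inl v \<in> T} = S}"
    by (rule finite_subset) (use fin in auto)
qed (use lb T0 in auto)

lemma asym_cut:
  fixes \<gamma> :: "'a \<Rightarrow> real" and \<alpha> \<beta> :: "'x \<Rightarrow> real"
  assumes fin: "finite e" "finite X"
    and T: "T \<subseteq> Inl ` e \<union> Inr ` X" "{v \<in> e. Inl v \<in> T} = S"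
  shows "cut_val (Inl ` e \<union> Inr ` X) (asymW \<gamma> \<alpha> \<beta>) T =
      (\<Sum>x\<in>X. if Inr x \<in> T then \<beta> x * sum \<gamma> (e - S) else \<alpha> x * sum \<gamma> S)"
proof -
  have S: "S \<subseteq> e" using T by auto
  have mem: "\<And>a. a \<in> e \<Longrightarrow> Inl a \<in> T \<longleftrightarrow> a \<in> S" using T by auto
  have "cut_val (Inl ` e \<union> Inr ` X) (asymW \<gamma> \<alpha> \<beta>) T =
     (\<Sum>a\<in>e. \<Sum>x\<in>X. if a \<in> S \<and> Inr x \<notin> T then \<alpha> x * \<gamma> a else 0)
     + (\<Sum>x\<in>X. \<Sum>a\<in>e. if Inr x \<in> T \<and> a \<notin> S then \<beta> x * \<gamma> a else 0)"
    using fin T mem by (simp add: cut_val_alt sum_plus_set cong: sum.cong if_cong)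
  also have "(\<Sum>a\<in>e. \<Sum>x\<in>X. if a \<in> S \<and> Inr x \<notin> T then \<alpha> x * \<gamma> a else 0)
      = (\<Sum>x\<in>X. if Inr x \<in> T then 0 else \<alpha> x * sum \<gamma> S)"
  proof -
    have "(\<Sum>a\<in>e. \<Sum>x\<in>X. if a \<in> S \<and> Inr x \<notin> T then \<alpha> x * \<gamma> a else 0)
       = (\<Sum>x\<in>X. \<Sum>a\<in>e. if a \<in> S \<and> Inr x \<notin> T then \<alpha> x * \<gamma> a else 0)"
      by (rule sum.swap)
    also have "\<dots> = (\<Sum>x\<in>X. if Inr x \<in> T then 0 else \<alpha> x * sum \<gamma> S)"
    proof (intro sum.cong refl)
      fix x
      have "(\<Sum>a\<in>e. if a \<in> S then \<alpha> x * \<gamma> a else 0) = (\<Sum>a\<in>e \<inter> S. \<alpha> x * \<gamma> a)"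
        using fin by (simp add: sum.inter_restrict)
      also have "\<dots> = \<alpha> x * sum \<gamma> S" using S by (simp add: Int_absorb1 sum_distrib_left)
      finally show "(\<Sum>a\<in>e. if a \<in> S \<and> Inr x \<notin> T then \<alpha> x * \<gamma> a else 0) = (if Inr x \<in> T then 0 else \<alpha> x * sum \<gamma> S)"
        by auto
    qed
    finally show ?thesis .
  qed
  also have "(\<Sum>x\<in>X. \<Sum>a\<in>e. if Inr x \<in> T \<and> a \<notin> S then \<beta> x * \<gamma> a else 0)
      = (\<Sum>x\<in>X. if Inr x \<in> T then \<beta> x * sum \<gamma> (e - S) else 0)"
  proof (intro sum.cong refl)
    fix x
    have "(\<Sum>a\<in>e. if a \<in> - S then \<beta> x * \<gamma> a else 0) = (\<Sum>a\<in>e \<inter> - S. \<beta> x * \<gamma> a)"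
      using fin by (simp add: sum.inter_restrict)
    also have "\<dots> = \<beta> x * sum \<gamma> (e - S)" by (simp add: Diff_eq sum_distrib_left)
    finally show "(\<Sum>a\<in>e. if Inr x \<in> T \<and> a \<notin> S then \<beta> x * \<gamma> a else 0) = (if Inr x \<in> T then \<beta> x * sum \<gamma> (e - S) else 0)"
      by auto
  qed
  finally show ?thesis by (simp add: sum.distrib[symmetric]) (intro sum.cong refl, simp)
qed

lemma asym_gadget:
  fixes \<gamma> :: "'a \<Rightarrow> real" and \<alpha> \<beta> :: "'x \<Rightarrow> real"
  assumes fin: "finite e" "finite X" and S: "S \<subseteq> e"
  shows "gadget_split e X (asymW \<gamma> \<alpha> \<beta>) S = (\<Sum>x\<in>X. min (\<alpha> x * sum \<gamma> S) (\<beta> x * sum \<gamma> (e - S)))"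
proof (rule gadget_Min[OF fin])
  fix T assume T: "T \<subseteq> Inl ` e \<union> Inr ` X" "{v \<in> e. Inl v \<in> T} = S"
  show "(\<Sum>x\<in>X. min (\<alpha> x * sum \<gamma> S) (\<beta> x * sum \<gamma> (e - S))) \<le> cut_val (Inl ` e \<union> Inr ` X) (asymW \<gamma> \<alpha> \<beta>) T"
    unfolding asym_cut[OF fin T] by (intro sum_mono) auto
next
  define T0 where "T0 = Inl ` S \<union> Inr ` {x\<in>X. \<beta> x * sum \<gamma> (e - S) \<le> \<alpha> x * sum \<gamma> S}"
  show T0: "T0 \<subseteq> Inl ` e \<union> Inr ` X" "{v \<in> e. Inl v \<in> T0} = S" using S by (auto simp: T0_def)
  show "cut_val (Inl ` e \<union> Inr ` X) (asymW \<gamma> \<alpha> \<beta>) T0 = (\<Sum>x\<in>X. min (\<alpha> x * sum \<gamma> S) (\<beta> x * sum \<gamma> (e - S)))"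
    unfolding asym_cut[OF fin T0] by (intro sum.cong refl) (auto simp: T0_def min_def)
qed



lemma symW_simps [simp]:
  "sym_union_W \<gamma> c (Inl a) (Inl w) = 0"
  "sym_union_W \<gamma> c (Inl a) (Inr (b, t)) = (if t then 0 else c b * \<gamma> a)"
  "sym_union_W \<gamma> c (Inr (b, t)) (Inl w) = (if t then c b * \<gamma> w else 0)"
  "sym_union_W \<gamma> c (Inr (b, t)) (Inr (b', t')) = (if \<not> t \<and> t' \<and> b = b' then c b * b else 0)"
  by (auto simp: sym_union_W_def split: bool.splits)

lemma sum_Ibool:
  assumes "finite I"
  shows "(\<Sum>x\<in>I \<times> (UNIV::bool set). F x) = (\<Sum>b\<in>I. F (b, False) + F (b, True))"
proof -
  have "(\<Sum>x\<in>I \<times> (UNIV::bool set). F x) = (\<Sum>b\<in>I. \<Sum>t\<in>UNIV. F (b, t))"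
    by (simp add: sum.cartesian_product)
  also have "\<dots> = (\<Sum>b\<in>I. F (b, False) + F (b, True))"
    by (simp add: UNIV_bool)
  finally show ?thesis .
qed

lemma delta_aux:
  fixes h :: "real \<Rightarrow> real"
  assumes "finite I" "x \<in> I"
  shows "(\<Sum>xa\<in>I. if A \<and> B xa then if x = xa then h xa else 0 else 0) = (if A \<and> B x then h x else 0)"
proof -
  have "(\<Sum>xa\<in>I. if A \<and> B xa then if x = xa then h xa else 0 else 0)
      = (\<Sum>xa\<in>I. if x = xa then (if A \<and> B x then h x else 0) else 0)"
    by (intro sum.cong refl) auto
  also have "\<dots> = (if A \<and> B x then h x else 0)" using assms by simp
  finally show ?thesis .
qed

lemma sym_cut:
  fixes \<gamma> :: "'a \<Rightarrow> real" and c :: "real \<Rightarrow> real"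
  assumes fin: "finite e" "finite I"
    and T: "T \<subseteq> Inl ` e \<union> Inr ` (I \<times> UNIV)" "{v \<in> e. Inl v \<in> T} = S"
  shows "cut_val (Inl ` e \<union> Inr ` (I \<times> UNIV)) (sym_union_W \<gamma> c) T =
      (\<Sum>b\<in>I. (if Inr (b, False) \<in> T then 0 else c b * sum \<gamma> S)
             + (if Inr (b, True) \<in> T then c b * sum \<gamma> (e - S) else 0)
             + (if Inr (b, False) \<in> T \<and> Inr (b, True) \<notin> T then c b * b else 0))"
proof -
  have S: "S \<subseteq> e" using T by auto
  have finX: "finite (I \<times> (UNIV::bool set))" using fin by simp
  have mem: "\<And>a. a \<in> e \<Longrightarrow> Inl a \<in> T \<longleftrightarrow> a \<in> S" using T by auto
  have "cut_val (Inl ` e \<union> Inr ` (I \<times> UNIV)) (sym_union_W \<gamma> c) T =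
     (\<Sum>a\<in>e. \<Sum>b\<in>I. if a \<in> S \<and> Inr (b, False) \<notin> T then c b * \<gamma> a else 0)
     + (\<Sum>b\<in>I. \<Sum>a\<in>e. if Inr (b, True) \<in> T \<and> a \<notin> S then c b * \<gamma> a else 0)
     + (\<Sum>b\<in>I. if Inr (b, False) \<in> T \<and> Inr (b, True) \<notin> T then c b * b else 0)"
    using fin finX T mem by (simp add: cut_val_alt sum_plus_set sum_Ibool sum.distrib delta_aux cong: sum.cong if_cong)
  also have "(\<Sum>a\<in>e. \<Sum>b\<in>I. if a \<in> S \<and> Inr (b, False) \<notin> T then c b * \<gamma> a else 0)
      = (\<Sum>b\<in>I. if Inr (b, False) \<in> T then 0 else c b * sum \<gamma> S)"
  proof -
    have "(\<Sum>a\<in>e. \<Sum>b\<in>I. if a \<in> S \<and> Inr (b, False) \<notin> T then c b * \<gamma> a else 0)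
       = (\<Sum>b\<in>I. \<Sum>a\<in>e. if a \<in> S \<and> Inr (b, False) \<notin> T then c b * \<gamma> a else 0)"
      by (rule sum.swap)
    also have "\<dots> = (\<Sum>b\<in>I. if Inr (b, False) \<in> T then 0 else c b * sum \<gamma> S)"
    proof (intro sum.cong refl)
      fix x
      have "(\<Sum>a\<in>e. if a \<in> S then c x * \<gamma> a else 0) = (\<Sum>a\<in>e \<inter> S. c x * \<gamma> a)"
        using fin by (simp add: sum.inter_restrict)
      also have "\<dots> = c x * sum \<gamma> S" using S by (simp add: Int_absorb1 sum_distrib_left)
      finally show "(\<Sum>a\<in>e. if a \<in> S \<and> Inr (x, False) \<notin> T then c x * \<gamma> a else 0) = (if Inr (x, False) \<in> T then 0 else c x * sum \<gamma> S)"
        by auto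
    qed
    finally show ?thesis .
  qed
  also have "(\<Sum>b\<in>I. \<Sum>a\<in>e. if Inr (b, True) \<in> T \<and> a \<notin> S then c b * \<gamma> a else 0)
      = (\<Sum>b\<in>I. if Inr (b, True) \<in> T then c b * sum \<gamma> (e - S) else 0)"
  proof (intro sum.cong refl)
    fix x
    have "(\<Sum>a\<in>e. if a \<in> - S then c x * \<gamma> a else 0) = (\<Sum>a\<in>e \<inter> - S. c x * \<gamma> a)"
      using fin by (simp add: sum.inter_restrict)
    also have "\<dots> = c x * sum \<gamma> (e - S)" by (simp add: Diff_eq sum_distrib_left)
    finally show "(\<Sum>a\<in>e. if Inr (x, True) \<in> T \<and> a \<notin> S then c x * \<gamma> a else 0) = (if Inr (x, True) \<in> T then c x * sum \<gamma> (e - S) else 0)"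
      by auto
  qed
  finally show ?thesis by (simp add: sum.distrib[symmetric])
qed

lemma sym_gadget:
  fixes \<gamma> :: "'a \<Rightarrow> real" and c :: "real \<Rightarrow> real"
  assumes fin: "finite e" "finite I" and S: "S \<subseteq> e"
    and c: "\<And>b. b \<in> I \<Longrightarrow> 0 \<le> c b" and gam: "\<And>v. v \<in> e \<Longrightarrow> 0 \<le> \<gamma> v"
  shows "gadget_split e (I \<times> UNIV) (sym_union_W \<gamma> c) S
     = (\<Sum>b\<in>I. c b * min (min (sum \<gamma> S) (sum \<gamma> (e - S))) b)"
proof (rule gadget_Min)
  show "finite e" "finite (I \<times> (UNIV::bool set))" using fin by auto
  have g1: "0 \<le> sum \<gamma> S" using S gam by (intro sum_nonneg) auto
  have g2: "0 \<le> sum \<gamma> (e - S)" using gam by (intro sum_nonneg) auto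
  fix T :: "('a + real \<times> bool) set" assume T: "T \<subseteq> Inl ` e \<union> Inr ` (I \<times> UNIV)" "{v \<in> e. Inl v \<in> T} = S"
  show "(\<Sum>b\<in>I. c b * min (min (sum \<gamma> S) (sum \<gamma> (e - S))) b) \<le> cut_val (Inl ` e \<union> Inr ` (I \<times> UNIV)) (sym_union_W \<gamma> c) T"
    unfolding sym_cut[OF fin T]
  proof (intro sum_mono)
    fix b assume b: "b \<in> I"
    have cb: "0 \<le> c b" using c b .
    have m1: "c b * min (min (sum \<gamma> S) (sum \<gamma> (e - S))) b \<le> c b * sum \<gamma> S"
      using cb by (intro mult_left_mono) auto
    have m2: "c b * min (min (sum \<gamma> S) (sum \<gamma> (e - S))) b \<le> c b * sum \<gamma> (e - S)"
      using cb by (intro mult_left_mono) auto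
    have m3: "c b * min (min (sum \<gamma> S) (sum \<gamma> (e - S))) b \<le> c b * b"
      using cb by (intro mult_left_mono) auto
    have m4: "0 \<le> c b * sum \<gamma> (e - S)" using cb g2 by simp
    show "c b * min (min (sum \<gamma> S) (sum \<gamma> (e - S))) b
       \<le> (if Inr (b, False) \<in> T then 0 else c b * sum \<gamma> S) +
          (if Inr (b, True) \<in> T then c b * sum \<gamma> (e - S) else 0) +
          (if Inr (b, False) \<in> T \<and> Inr (b, True) \<notin> T then c b * b else 0)"
      using m1 m2 m3 m4 by auto
  qed
next
  define C where "C = {b \<in> I. sum \<gamma> (e - S) \<le> sum \<gamma> S \<or> b \<le> sum \<gamma> S}"
  define D where "D = {b \<in> I. sum \<gamma> (e - S) \<le> sum \<gamma> S \<and> sum \<gamma> (e - S) \<le> b}"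
  define T0 where "T0 = Inl ` S \<union> Inr ` ((C \<times> {False}) \<union> (D \<times> {True}))"
  have fin2: "finite e" "finite I" using fin by auto
  show T0: "T0 \<subseteq> Inl ` e \<union> Inr ` (I \<times> UNIV)" "{v \<in> e. Inl v \<in> T0} = S"
    using S by (auto simp: T0_def C_def D_def)
  show "cut_val (Inl ` e \<union> Inr ` (I \<times> UNIV)) (sym_union_W \<gamma> c) T0 = (\<Sum>b\<in>I. c b * min (min (sum \<gamma> S) (sum \<gamma> (e - S))) b)"
    unfolding sym_cut[OF fin2 T0]
  proof (intro sum.cong refl)
    fix b assume b: "b \<in> I"
    have cb: "0 \<le> c b" using c b .
    show "(if Inr (b, False) \<in> T0 then 0 else c b * sum \<gamma> S) +
          (if Inr (b, True) \<in> T0 then c b * sum \<gamma> (e - S) else 0) +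
          (if Inr (b, False) \<in> T0 \<and> Inr (b, True) \<notin> T0 then c b * b else 0)
        = c b * min (min (sum \<gamma> S) (sum \<gamma> (e - S))) b"
      using b cb by (auto simp: T0_def C_def D_def min_def)
  qed
qed



lemma enum_set:
  fixes N :: "real set"
  assumes "finite N" "N \<noteq> {}"
  obtains t :: "nat \<Rightarrow> real" and n :: nat where "\<And>i j. i < j \<Longrightarrow> j \<le> n \<Longrightarrow> t i < t j" "t ` {..n} = N"
proof -
  define xs where "xs = sorted_list_of_set N"
  have sw: "sorted_wrt (<) xs" unfolding xs_def by (rule strict_sorted_list_of_set)
  have set: "set xs = N" unfolding xs_def using assms(1) by (rule set_sorted_list_of_set)
  have ne: "xs \<noteq> []" using set assms(2) by auto
  define n where "n = length xs - 1"
  have L: "length xs = Suc n" using ne unfolding n_def by (cases xs) simp_all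
  have m: "\<And>i j. i < j \<Longrightarrow> j \<le> n \<Longrightarrow> xs ! i < xs ! j"
  proof -
    fix i j assume "i < j" "j \<le> n"
    then have "j < length xs" using L by simp
    then show "xs ! i < xs ! j" using sorted_wrt_nth_less[OF sw \<open>i < j\<close>] by blast
  qed
  have im: "(!) xs ` {..n} = N"
  proof -
    have "{..n} = {0..<length xs}" using L by auto
    then have "(!) xs ` {..n} = set (take (length xs) xs)" using nth_image[of "length xs" xs] by simp
    then show ?thesis using set by simp
  qed
  show ?thesis by (rule that[OF m im])
qed

lemma enum_first:
  fixes t :: "nat \<Rightarrow> real"
  assumes mono: "\<And>i j. i < j \<Longrightarrow> j \<le> n \<Longrightarrow> t i < t j" and img: "t ` {..n} = N"
    and lo: "lo \<in> N" "\<And>x. x \<in> N \<Longrightarrow> lo \<le> x"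
  shows "t 0 = lo"
proof -
  obtain i where i: "i \<le> n" "t i = lo" using lo img by auto
  have "t 0 \<in> N" using img by auto
  then have "lo \<le> t 0" using lo by auto
  show ?thesis
  proof (cases "i = 0")
    case False then have "t 0 < t i" using mono i by auto
    then show ?thesis using i \<open>lo \<le> t 0\<close> by simp
  qed (use i in auto)
qed

lemma enum_last:
  fixes t :: "nat \<Rightarrow> real"
  assumes mono: "\<And>i j. i < j \<Longrightarrow> j \<le> n \<Longrightarrow> t i < t j" and img: "t ` {..n} = N"
    and hi: "hi \<in> N" "\<And>x. x \<in> N \<Longrightarrow> x \<le> hi"
  shows "t n = hi"
proof -
  obtain i where i: "i \<le> n" "t i = hi" using hi img by auto
  have "t n \<in> N" using img by auto
  then have "t n \<le> hi" using hi by auto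
  show ?thesis
  proof (cases "i = n")
    case False then have "t i < t n" using mono i by auto
    then show ?thesis using i \<open>t n \<le> hi\<close> by simp
  qed (use i in auto)
qed

lemma enum_inj:
  fixes t :: "nat \<Rightarrow> real"
  assumes mono: "\<And>i j. i < j \<Longrightarrow> j \<le> n \<Longrightarrow> t i < t j"
  shows "inj_on t {..n}"
proof (rule inj_onI)
  fix i j assume "i \<in> {..n}" "j \<in> {..n}" "t i = t j"
  then show "i = j" using mono[of i j] mono[of j i] by (cases i j rule: linorder_cases) auto
qed

lemma concave_slope:
  fixes g :: "real \<Rightarrow> real"
  assumes conc: "concave_on {0..G} g" and xyz: "0 \<le> x" "x < y" "y < z" "z \<le> G"
  shows "(g z - g y) / (z - y) \<le> (g y - g x) / (y - x)"
proof -
  have cv: "convex_on {0..G} (\<lambda>x. - g x)" using conc by (simp add: concave_on_def)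
  have "((- g x) - (- g y)) / (x - y) \<le> ((- g y) - (- g z)) / (y - z)"
    using convex_on_slope_le(1)[OF cv, of x z y] convex_on_slope_le(2)[OF cv, of x z y] xyz by auto
  moreover have "((- g x) - (- g y)) / (x - y) = - ((g y - g x) / (y - x))"
  proof -
    have "((- g x) - (- g y)) / (x - y) = (g y - g x) / (- (y - x))" by simp
    then show ?thesis by (simp only: divide_minus_right)
  qed
  moreover have "((- g y) - (- g z)) / (y - z) = - ((g z - g y) / (z - y))"
  proof -
    have "((- g y) - (- g z)) / (y - z) = (g z - g y) / (- (z - y))" by simp
    then show ?thesis by (simp only: divide_minus_right)
  qed
  ultimately show ?thesis by simp
qed

lemma min_tent:
  fixes G b x :: real
  assumes "0 < G"
  shows "min ((G - b) * x) (b * (G - x)) = G * min x b - b * x"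
proof -
  have e: "(G - b) * x - b * (G - x) = G * (x - b)" by (simp add: algebra_simps)
  show ?thesis
  proof (cases "x \<le> b")
    case True
    then have "G * (x - b) \<le> 0" using assms by (simp add: mult_nonneg_nonpos)
    then have "(G - b) * x \<le> b * (G - x)" using e by linarith
    then show ?thesis using True by (simp add: min_def right_diff_distrib left_diff_distrib)
  next
    case False
    then have "G * (x - b) > 0" using assms by simp
    then have "\<not> (G - b) * x \<le> b * (G - x)" using e by linarith
    then show ?thesis using False by (simp add: min_def right_diff_distrib left_diff_distrib)
  qed
qed



lemma part_a:
  fixes e :: "'a set" and \<gamma> :: "'a \<Rightarrow> real" and g :: "real \<Rightarrow> real"
  assumes fin: "finite e" and card: "card e \<ge> 2"
    and gpos: "\<forall>v\<in>e. 0 < \<gamma> v"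
    and conc: "concave_on {0..sum \<gamma> e} g"
    and g0: "g 0 = 0" and gG: "g (sum \<gamma> e) = 0"
  shows "\<exists>a :: real \<Rightarrow> real. (\<forall>b\<in>Q_a e \<gamma>. 0 \<le> a b) \<and>
            (\<forall>S. S \<subseteq> e \<longrightarrow>
               g (sum \<gamma> S) = (\<Sum>b\<in>Q_a e \<gamma>. a b *
                   min ((sum \<gamma> e - b) * sum \<gamma> S) (b * sum \<gamma> (e - S))))"
proof -
  define G where "G = sum \<gamma> e"
  have ene: "e \<noteq> {}" using card by auto
  have Gpos: "0 < G" unfolding G_def using fin ene gpos by (intro sum_pos) auto
  have sdiff: "\<And>S. S \<subseteq> e \<Longrightarrow> sum \<gamma> (e - S) = G - sum \<gamma> S"
    unfolding G_def using fin by (simp add: sum_diff finite_subset)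
  have snn: "\<And>S. S \<subseteq> e \<Longrightarrow> 0 \<le> sum \<gamma> S"
    using gpos by (intro sum_nonneg) (auto simp: less_imp_le)
  have sle: "\<And>S. S \<subseteq> e \<Longrightarrow> sum \<gamma> S \<le> G"
    using sdiff snn[of "e - _"] by (metis Diff_subset diff_ge_0_iff_ge)
  have Qfin: "finite (Q_a e \<gamma>)"
  proof -
    have "Q_a e \<gamma> \<subseteq> sum \<gamma> ` Pow e" unfolding Q_a_def by auto
    then show ?thesis by (rule finite_subset) (simp add: fin)
  qed
  have Qin: "\<And>b. b \<in> Q_a e \<gamma> \<Longrightarrow> 0 < b \<and> b < G"
  proof -
    fix b assume "b \<in> Q_a e \<gamma>"
    then obtain S where S: "b = sum \<gamma> S" "S \<noteq> {}" "S \<subset> e" unfolding Q_a_def by auto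
    have fS: "finite S" using S fin finite_subset by auto
    have p1: "0 < sum \<gamma> S" using S fS gpos by (intro sum_pos) auto
    have p2: "0 < sum \<gamma> (e - S)" using S fin gpos by (intro sum_pos) auto
    show "0 < b \<and> b < G" using p1 p2 sdiff[of S] S by auto
  qed
  define N where "N = insert 0 (insert G (Q_a e \<gamma>))"
  have Nfin: "finite N" using Qfin by (simp add: N_def)
  have Nrange: "\<And>x. x \<in> N \<Longrightarrow> 0 \<le> x \<and> x \<le> G" using Qin Gpos by (auto simp: N_def less_imp_le)
  obtain t :: "nat \<Rightarrow> real" and n :: nat where mono: "\<And>i j. i < j \<Longrightarrow> j \<le> n \<Longrightarrow> t i < t j"
    and img: "t ` {..n} = N"
    by (rule enum_set[OF Nfin]) (auto simp: N_def)
  have t0: "t 0 = 0" by (rule enum_first[OF mono img]) (use Nrange in \<open>auto simp: N_def\<close>)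
  have tn: "t n = G" by (rule enum_last[OF mono img]) (use Nrange in \<open>auto simp: N_def\<close>)
  have n0: "n \<noteq> 0" proof assume "n = 0" then show False using t0 tn Gpos by simp qed
  have inj: "inj_on t {..n}" by (rule enum_inj[OF mono])
  have tQ: "t ` {1..<n} = Q_a e \<gamma>"
  proof
    show "t ` {1..<n} \<subseteq> Q_a e \<gamma>"
    proof
      fix x assume "x \<in> t ` {1..<n}"
      then obtain j where j: "j \<in> {1..<n}" "x = t j" by auto
      have "t 0 < t j" "t j < t n" using mono j by auto
      moreover have "t j \<in> N" using img j by auto
      ultimately show "x \<in> Q_a e \<gamma>" using j t0 tn by (auto simp: N_def)
    qed
  next
    show "Q_a e \<gamma> \<subseteq> t ` {1..<n}"
    proof
      fix b assume b: "b \<in> Q_a e \<gamma>"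
      then have "b \<in> t ` {..n}" using img by (auto simp: N_def)
      then obtain i where i: "i \<le> n" "b = t i" by auto
      have "i \<noteq> 0" "i \<noteq> n" using Qin[OF b] i t0 tn by (cases "i = 0"; cases "i = n"; simp)+
      then show "b \<in> t ` {1..<n}" using i by auto
    qed
  qed
  have inj1: "inj_on t {1..<n}" using inj by (rule inj_on_subset) auto
  define f where "f j = g (t j)" for j
  define s where "s j = (f (min j n) - f (min j n - 1)) / (t (min j n) - t (min j n - 1))" for j
  have slope: "\<And>j. 1 \<le> j \<Longrightarrow> j \<le> n \<Longrightarrow> f j - f (j-1) = s j * (t j - t (j-1))"
  proof -
    fix j :: nat assume j: "1 \<le> j" "j \<le> n"
    have "t (j - 1) < t j" using mono[of "j-1" j] j by auto
    then show "f j - f (j-1) = s j * (t j - t (j-1))" using j by (simp add: s_def min_def)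
  qed
  have f0: "f 0 = 0" using t0 g0 by (simp add: f_def)
  have fn: "f n = 0" using tn gG by (simp add: f_def G_def)
  define D where "D j = s j - s (Suc j)" for j
  have C: "\<And>k. k \<le> n \<Longrightarrow> (\<Sum>j\<in>{1..n}. D j * min (t k) (t j)) = f k - s (Suc n) * t k"
    unfolding D_def by (rule core[OF mono t0 f0 slope])
  have sSn: "s (Suc n) = s n" by (simp add: s_def)
  have Dn: "D n = 0" using sSn by (simp add: D_def)
  have tle: "\<And>j. j \<le> n \<Longrightarrow> t j \<le> t n" using mono by (metis le_less order_refl)
  have sumDt: "(\<Sum>j\<in>{1..n}. D j * t j) = - s n * G"
  proof -
    have "(\<Sum>j\<in>{1..n}. D j * t j) = (\<Sum>j\<in>{1..n}. D j * min (t n) (t j))"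
      using tle by (intro sum.cong refl) (simp add: min_absorb2)
    also have "\<dots> = - s n * G" using C[of n] fn tn sSn by simp
    finally show ?thesis .
  qed
  define a where "a b = D (the_inv_into {1..<n} t b) / G" for b
  have aj: "\<And>j. j \<in> {1..<n} \<Longrightarrow> a (t j) = D j / G"
    unfolding a_def using inj1 by (simp add: the_inv_into_f_f)
  have Dnn: "\<And>j. j \<in> {1..<n} \<Longrightarrow> 0 \<le> D j"
  proof -
    fix j assume j: "j \<in> {1..<n}"
    have lt1: "t (j - 1) < t j" using mono[of "j-1" j] j by auto
    have lt2: "t j < t (Suc j)" using mono[of j "Suc j"] j by auto
    have ge0: "0 \<le> t (j - 1)"
    proof (cases "j - 1 = 0")
      case True then show ?thesis using t0 by simp
    next
      case False then have "t 0 < t (j-1)" using mono[of 0 "j-1"] j by auto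
      then show ?thesis using t0 by simp
    qed
    have leG: "t (Suc j) \<le> G" using tle[of "Suc j"] j tn by auto
    have "(g (t (Suc j)) - g (t j)) / (t (Suc j) - t j) \<le> (g (t j) - g (t (j - 1))) / (t j - t (j - 1))"
      by (rule concave_slope[OF conc[folded G_def]]) (use lt1 lt2 ge0 leG in auto)
    moreover have "s j = (g (t j) - g (t (j - 1))) / (t j - t (j - 1))"
      using j by (simp add: s_def f_def min_def)
    moreover have "s (Suc j) = (g (t (Suc j)) - g (t j)) / (t (Suc j) - t j)"
      using j by (simp add: s_def f_def min_def)
    ultimately show "0 \<le> D j" by (simp add: D_def)
  qed
  show ?thesis
  proof (intro exI[of _ a] conjI allI impI ballI)
    fix b assume b: "b \<in> Q_a e \<gamma>"
    have "b \<in> t ` {1..<n}" using tQ b by simp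
    then obtain j where "j \<in> {1..<n}" "b = t j" by (rule imageE) simp
    then show "0 \<le> a b" using aj Dnn Gpos by simp
  next
    fix S assume S: "S \<subseteq> e"
    define x where "x = sum \<gamma> S"
    have xN: "x \<in> N"
    proof (cases "S = {} \<or> S = e")
      case True then show ?thesis by (auto simp: x_def N_def G_def)
    next
      case False then show ?thesis using S by (auto simp: x_def N_def Q_a_def)
    qed
    then obtain k where k: "k \<le> n" "x = t k" using img by auto
    have "(\<Sum>b\<in>Q_a e \<gamma>. a b * min ((sum \<gamma> e - b) * sum \<gamma> S) (b * sum \<gamma> (e - S)))
        = (\<Sum>b\<in>t ` {1..<n}. a b * min ((G - b) * x) (b * (G - x)))"
      using tQ sdiff[OF S] by (simp add: x_def G_def)
    also have "\<dots> = (\<Sum>j\<in>{1..<n}. a (t j) * min ((G - t j) * x) (t j * (G - x)))"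
      using inj1 by (simp add: sum.reindex)
    also have "\<dots> = (\<Sum>j\<in>{1..<n}. D j * min x (t j) - (x / G) * (D j * t j))"
    proof (intro sum.cong refl)
      fix j assume j: "j \<in> {1..<n}"
      have "a (t j) * min ((G - t j) * x) (t j * (G - x)) = D j / G * (G * min x (t j) - t j * x)"
        by (simp only: aj[OF j] min_tent[OF Gpos])
      also have "\<dots> = D j * min x (t j) - (x / G) * (D j * t j)"
        using Gpos by (simp add: field_simps)
      finally show "a (t j) * min ((G - t j) * x) (t j * (G - x)) = D j * min x (t j) - (x / G) * (D j * t j)" .
    qed
    also have "\<dots> = (\<Sum>j\<in>{1..n}. D j * min x (t j) - (x / G) * (D j * t j))"
    proof -
      have "{1..n} = insert n {1..<n}" using n0 by auto
      then show ?thesis using Dn by simp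
    qed
    also have "\<dots> = (\<Sum>j\<in>{1..n}. D j * min x (t j)) - (x / G) * (\<Sum>j\<in>{1..n}. D j * t j)"
      by (simp add: sum_subtractf sum_distrib_left)
    also have "\<dots> = f k"
      using C[OF k(1)] k sumDt sSn Gpos by simp
    finally show "g (sum \<gamma> S) = (\<Sum>b\<in>Q_a e \<gamma>. a b * min ((sum \<gamma> e - b) * sum \<gamma> S) (b * sum \<gamma> (e - S)))"
      using k by (simp add: f_def x_def)
  qed
qed



lemma part_s:
  fixes e :: "'a set" and \<gamma> :: "'a \<Rightarrow> real" and g :: "real \<Rightarrow> real"
  assumes fin: "finite e"
    and gpos: "\<forall>v\<in>e. 0 < \<gamma> v"
    and conc: "concave_on {0..sum \<gamma> e} g"
    and g0: "g 0 = 0"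
    and sym: "\<forall>x\<in>{0..sum \<gamma> e}. g x = g (sum \<gamma> e - x)"
  shows "\<exists>a :: real \<Rightarrow> real. (\<forall>b\<in>Q_s e \<gamma>. 0 \<le> a b) \<and>
            (\<forall>S. S \<subseteq> e \<longrightarrow>
               g (sum \<gamma> S) = (\<Sum>b\<in>Q_s e \<gamma>. a b *
                   min (min (sum \<gamma> S) (sum \<gamma> (e - S))) b))"
proof -
  define G where "G = sum \<gamma> e"
  have sdiff: "\<And>S. S \<subseteq> e \<Longrightarrow> sum \<gamma> (e - S) = G - sum \<gamma> S"
    unfolding G_def using fin by (simp add: sum_diff finite_subset)
  have snn: "\<And>S. S \<subseteq> e \<Longrightarrow> 0 \<le> sum \<gamma> S"
    using gpos by (intro sum_nonneg) (auto simp: less_imp_le)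
  have Qfin: "finite (Q_s e \<gamma>)"
  proof -
    have "Q_s e \<gamma> \<subseteq> sum \<gamma> ` Pow e" unfolding Q_s_def by auto
    then show ?thesis by (rule finite_subset) (simp add: fin)
  qed
  have Qin: "\<And>b. b \<in> Q_s e \<gamma> \<Longrightarrow> 0 < b \<and> b \<le> G / 2"
    unfolding Q_s_def G_def by auto
  define N where "N = insert 0 (Q_s e \<gamma>)"
  have Nfin: "finite N" using Qfin by (simp add: N_def)
  have Nrange: "\<And>x. x \<in> N \<Longrightarrow> 0 \<le> x \<and> x \<le> G / 2"
  proof -
    fix x assume "x \<in> N"
    moreover have "0 \<le> G" using snn[of e] by (simp add: G_def)
    ultimately show "0 \<le> x \<and> x \<le> G / 2" using Qin by (auto simp: N_def less_imp_le)
  qed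
  obtain t :: "nat \<Rightarrow> real" and m :: nat where mono: "\<And>i j. i < j \<Longrightarrow> j \<le> m \<Longrightarrow> t i < t j"
    and img: "t ` {..m} = N"
    by (rule enum_set[OF Nfin]) (auto simp: N_def)
  have t0: "t 0 = 0" by (rule enum_first[OF mono img]) (use Nrange in \<open>auto simp: N_def\<close>)
  have inj: "inj_on t {..m}" by (rule enum_inj[OF mono])
  have trange: "\<And>j. j \<le> m \<Longrightarrow> 0 \<le> t j \<and> t j \<le> G / 2" using img Nrange by auto
  have tQ: "t ` {1..m} = Q_s e \<gamma>"
  proof
    show "t ` {1..m} \<subseteq> Q_s e \<gamma>"
    proof
      fix x assume "x \<in> t ` {1..m}"
      then obtain j where j: "j \<in> {1..m}" "x = t j" by auto
      have "t 0 < t j" using mono j by auto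
      moreover have "t j \<in> N" using img j by auto
      ultimately show "x \<in> Q_s e \<gamma>" using j t0 by (auto simp: N_def)
    qed
  next
    show "Q_s e \<gamma> \<subseteq> t ` {1..m}"
    proof
      fix b assume b: "b \<in> Q_s e \<gamma>"
      then have "b \<in> t ` {..m}" using img by (auto simp: N_def)
      then obtain i where i: "i \<le> m" "b = t i" by auto
      have "i \<noteq> 0" using Qin[OF b] i t0 by (cases "i = 0") simp_all
      then show "b \<in> t ` {1..m}" using i by auto
    qed
  qed
  have inj1: "inj_on t {1..m}" using inj by (rule inj_on_subset) auto
  define f where "f j = g (t j)" for j
  define s where "s j = (if j \<le> m then (f j - f (j - 1)) / (t j - t (j - 1)) else 0)" for j
  have slope: "\<And>j. 1 \<le> j \<Longrightarrow> j \<le> m \<Longrightarrow> f j - f (j-1) = s j * (t j - t (j-1))"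
  proof -
    fix j :: nat assume j: "1 \<le> j" "j \<le> m"
    have "t (j - 1) < t j" using mono[of "j-1" j] j by auto
    then show "f j - f (j-1) = s j * (t j - t (j-1))" using j by (simp add: s_def)
  qed
  have f0: "f 0 = 0" using t0 g0 by (simp add: f_def)
  define D where "D j = s j - s (Suc j)" for j
  have C: "\<And>k. k \<le> m \<Longrightarrow> (\<Sum>j\<in>{1..m}. D j * min (t k) (t j)) = f k"
    unfolding D_def using core[OF mono t0 f0 slope] by (simp add: s_def)
  define a where "a b = D (the_inv_into {1..m} t b)" for b
  have aj: "\<And>j. j \<in> {1..m} \<Longrightarrow> a (t j) = D j"
    unfolding a_def using inj1 by (simp add: the_inv_into_f_f)
  have Dnn: "\<And>j. j \<in> {1..m} \<Longrightarrow> 0 \<le> D j"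
  proof -
    fix j assume j: "j \<in> {1..m}"
    have lt1: "t (j - 1) < t j" using mono[of "j-1" j] j by auto
    have ge0: "0 \<le> t (j - 1)" using trange[of "j - 1"] j by auto
    have sj: "s j = (g (t j) - g (t (j - 1))) / (t j - t (j - 1))"
      using j by (simp add: s_def f_def)
    show "0 \<le> D j"
    proof (cases "j = m")
      case False
      then have jm: "Suc j \<le> m" using j by auto
      have lt2: "t j < t (Suc j)" using mono[of j "Suc j"] jm by auto
      have leG: "t (Suc j) \<le> G" using trange[OF jm] snn[of e] by (simp add: G_def)
      have "(g (t (Suc j)) - g (t j)) / (t (Suc j) - t j) \<le> (g (t j) - g (t (j - 1))) / (t j - t (j - 1))"
        by (rule concave_slope[OF conc[folded G_def]]) (use lt1 lt2 ge0 leG in auto)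
      moreover have "s (Suc j) = (g (t (Suc j)) - g (t j)) / (t (Suc j) - t j)"
        using jm by (simp add: s_def f_def)
      ultimately show ?thesis using sj by (simp add: D_def)
    next
      case True
      define x where "x = t (j - 1)"
      define y where "y = G - x"
      have xr: "0 \<le> x" "x \<le> G / 2" using trange[of "j - 1"] j by (auto simp: x_def)
      have cr: "x \<le> t j" "t j \<le> y" using lt1 trange[of j] j xr by (auto simp: x_def y_def)
      have cc: "concave_on {x..y} g"
        using conc unfolding concave_on_def G_def[symmetric]
        by (rule convex_on_subset) (use xr in \<open>auto simp: y_def\<close>)
      have "x \<in> {0..sum \<gamma> e}" using xr by (auto simp: G_def)
      then have gy: "g y = g x" using sym unfolding y_def G_def by metis
      have "g (t j) \<ge> (g y - g x) / (y - x) * (t j - x) + g x"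
        using concave_onD_Icc'[OF cc, of "t j"] cr by simp
      then have "g (t j) \<ge> g x" using gy by simp
      then have "0 \<le> s j" using sj lt1 by (simp add: x_def)
      moreover have "s (Suc j) = 0" using True by (simp add: s_def)
      ultimately show ?thesis by (simp add: D_def)
    qed
  qed
  show ?thesis
  proof (intro exI[of _ a] conjI allI impI ballI)
    fix b assume b: "b \<in> Q_s e \<gamma>"
    have "b \<in> t ` {1..m}" using tQ b by simp
    then obtain j where "j \<in> {1..m}" "b = t j" by (rule imageE) simp
    then show "0 \<le> a b" using aj Dnn by simp
  next
    fix S assume S: "S \<subseteq> e"
    define y where "y = min (sum \<gamma> S) (sum \<gamma> (e - S))"
    have gy: "g (sum \<gamma> S) = g y"
    proof (cases "sum \<gamma> S \<le> sum \<gamma> (e - S)")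
      case True then show ?thesis by (simp add: y_def)
    next
      case False
      then have "y = G - sum \<gamma> S" using sdiff[OF S] by (simp add: y_def)
      moreover have "sum \<gamma> S \<in> {0..G}" using snn[OF S] snn[of "e - S"] sdiff[OF S] by auto
      ultimately show ?thesis using sym unfolding G_def by metis
    qed
    have yN: "y \<in> N"
    proof -
      obtain S' where S': "S' \<subseteq> e" "y = sum \<gamma> S'"
        using S by (cases "sum \<gamma> S \<le> sum \<gamma> (e - S)") (auto simp: y_def)
      have "y \<le> G / 2" using sdiff[OF S] by (simp add: y_def min_def)
      moreover have "0 \<le> y" using S' snn by simp
      ultimately show ?thesis using S' by (cases "y = 0") (auto simp: N_def Q_s_def G_def)
    qed
    then obtain k where k: "k \<le> m" "y = t k" using img by auto
    have "(\<Sum>b\<in>Q_s e \<gamma>. a b * min (min (sum \<gamma> S) (sum \<gamma> (e - S))) b)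
        = (\<Sum>b\<in>t ` {1..m}. a b * min (t k) b)"
      using tQ k by (simp add: y_def)
    also have "\<dots> = (\<Sum>j\<in>{1..m}. a (t j) * min (t k) (t j))"
      using inj1 by (simp add: sum.reindex)
    also have "\<dots> = (\<Sum>j\<in>{1..m}. D j * min (t k) (t j))"
      using aj by simp
    also have "\<dots> = f k" using C[OF k(1)] .
    finally show "g (sum \<gamma> S) = (\<Sum>b\<in>Q_s e \<gamma>. a b * min (min (sum \<gamma> S) (sum \<gamma> (e - S))) b)"
      using k gy by (simp add: f_def)
  qed
qed



lemma asym_union_eq: "asym_union_W \<gamma> \<alpha> \<beta> = asymW \<gamma> \<alpha> \<beta>"
  by (intro ext) (simp add: asym_union_W_def asymW_def)

lemma Q_a_range:
  assumes fin: "finite e" and gpos: "\<forall>v\<in>e. 0 < \<gamma> v" and b: "b \<in> Q_a e \<gamma>"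
  shows "0 < b \<and> b < sum \<gamma> e"
proof -
  obtain S where S: "b = sum \<gamma> S" "S \<noteq> {}" "S \<subset> e" using b unfolding Q_a_def by auto
  have fS: "finite S" using S fin finite_subset by auto
  have p1: "0 < sum \<gamma> S" using S fS gpos by (intro sum_pos) auto
  have p2: "0 < sum \<gamma> (e - S)" using S fin gpos by (intro sum_pos) auto
  have "sum \<gamma> (e - S) = sum \<gamma> e - sum \<gamma> S" using fin S by (simp add: sum_diff finite_subset)
  then show ?thesis using p1 p2 S by auto
qed

theorem theorem3:
  fixes e :: "'a set" and \<gamma> :: "'a \<Rightarrow> real" and g :: "real \<Rightarrow> real"
  assumes fin: "finite e" and card: "card e \<ge> 2"
    and gpos: "\<forall>v\<in>e. 0 < \<gamma> v"
    and conc: "concave_on {0..sum \<gamma> e} g"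
    and gnn: "\<forall>x\<in>{0..sum \<gamma> e}. 0 \<le> g x"
    and g0: "g 0 = 0" and gG: "g (sum \<gamma> e) = 0"
  shows "graph_reducible e (\<lambda>S. g (sum \<gamma> S))
       \<and> (\<exists>a :: real \<Rightarrow> real. (\<forall>b\<in>Q_a e \<gamma>. 0 \<le> a b) \<and>
            (\<forall>S. S \<subseteq> e \<longrightarrow>
               g (sum \<gamma> S) = (\<Sum>b\<in>Q_a e \<gamma>. a b *
                   min ((sum \<gamma> e - b) * sum \<gamma> S) (b * sum \<gamma> (e - S)))) \<and>
            (\<forall>S. S \<subseteq> e \<longrightarrow>
               g (sum \<gamma> S) = gadget_split e (Q_a e \<gamma>)
                  (asym_union_W \<gamma> (\<lambda>b. a b * (sum \<gamma> e - b)) (\<lambda>b. a b * b)) S))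
       \<and> ((\<forall>x\<in>{0..sum \<gamma> e}. g x = g (sum \<gamma> e - x)) \<longrightarrow>
          (\<exists>a :: real \<Rightarrow> real. (\<forall>b\<in>Q_s e \<gamma>. 0 \<le> a b) \<and>
            (\<forall>S. S \<subseteq> e \<longrightarrow>
               g (sum \<gamma> S) = (\<Sum>b\<in>Q_s e \<gamma>. a b *
                   min (min (sum \<gamma> S) (sum \<gamma> (e - S))) b)) \<and>
            (\<forall>S. S \<subseteq> e \<longrightarrow>
               g (sum \<gamma> S) = gadget_split e (Q_s e \<gamma> \<times> UNIV) (sym_union_W \<gamma> a) S)))"
proof -
  define G where "G = sum \<gamma> e"
  have Qfin: "finite (Q_a e \<gamma>)"
  proof -
    have "Q_a e \<gamma> \<subseteq> sum \<gamma> ` Pow e" unfolding Q_a_def by auto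
    then show ?thesis by (rule finite_subset) (simp add: fin)
  qed
  obtain a where anm: "\<forall>b\<in>Q_a e \<gamma>. 0 \<le> a b"
    and aid: "\<forall>S. S \<subseteq> e \<longrightarrow> g (sum \<gamma> S) = (\<Sum>b\<in>Q_a e \<gamma>. a b *
                   min ((sum \<gamma> e - b) * sum \<gamma> S) (b * sum \<gamma> (e - S)))"
    using part_a[OF fin card gpos conc g0 gG] by blast
  define \<alpha> where "\<alpha> b = a b * (sum \<gamma> e - b)" for b
  define \<beta> where "\<beta> b = a b * b" for b
  have key: "\<And>S. S \<subseteq> e \<Longrightarrow> g (sum \<gamma> S) = (\<Sum>b\<in>Q_a e \<gamma>. min (\<alpha> b * sum \<gamma> S) (\<beta> b * sum \<gamma> (e - S)))"
  proof -
    fix S assume S: "S \<subseteq> e"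
    have "g (sum \<gamma> S) = (\<Sum>b\<in>Q_a e \<gamma>. a b * min ((sum \<gamma> e - b) * sum \<gamma> S) (b * sum \<gamma> (e - S)))"
      using aid S by blast
    also have "\<dots> = (\<Sum>b\<in>Q_a e \<gamma>. min (\<alpha> b * sum \<gamma> S) (\<beta> b * sum \<gamma> (e - S)))"
    proof (intro sum.cong refl)
      fix b assume "b \<in> Q_a e \<gamma>"
      then have "0 \<le> a b" using anm by blast
      then show "a b * min ((sum \<gamma> e - b) * sum \<gamma> S) (b * sum \<gamma> (e - S)) = min (\<alpha> b * sum \<gamma> S) (\<beta> b * sum \<gamma> (e - S))"
        by (simp add: min_mult_distrib_left \<alpha>_def \<beta>_def mult.assoc)
    qed
    finally show "g (sum \<gamma> S) = (\<Sum>b\<in>Q_a e \<gamma>. min (\<alpha> b * sum \<gamma> S) (\<beta> b * sum \<gamma> (e - S)))" .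
  qed
  have part2: "\<exists>a :: real \<Rightarrow> real. (\<forall>b\<in>Q_a e \<gamma>. 0 \<le> a b) \<and>
            (\<forall>S. S \<subseteq> e \<longrightarrow>
               g (sum \<gamma> S) = (\<Sum>b\<in>Q_a e \<gamma>. a b *
                   min ((sum \<gamma> e - b) * sum \<gamma> S) (b * sum \<gamma> (e - S)))) \<and>
            (\<forall>S. S \<subseteq> e \<longrightarrow>
               g (sum \<gamma> S) = gadget_split e (Q_a e \<gamma>)
                  (asym_union_W \<gamma> (\<lambda>b. a b * (sum \<gamma> e - b)) (\<lambda>b. a b * b)) S)"
  proof (intro exI[of _ a] conjI allI impI)
    fix S assume S: "S \<subseteq> e"
    show "g (sum \<gamma> S) = gadget_split e (Q_a e \<gamma>)
                  (asym_union_W \<gamma> (\<lambda>b. a b * (sum \<gamma> e - b)) (\<lambda>b. a b * b)) S"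
      unfolding asym_union_eq using asym_gadget[OF fin Qfin S, of \<gamma> \<alpha> \<beta>] key[OF S]
      by (simp add: \<alpha>_def[abs_def] \<beta>_def[abs_def])
  qed (use anm aid in auto)
  have nnab: "\<And>b. b \<in> Q_a e \<gamma> \<Longrightarrow> 0 \<le> \<alpha> b \<and> 0 \<le> \<beta> b"
  proof -
    fix b assume b: "b \<in> Q_a e \<gamma>"
    have "0 \<le> a b" using anm b by blast
    moreover have "0 < b \<and> b < sum \<gamma> e" by (rule Q_a_range[OF fin gpos b])
    ultimately show "0 \<le> \<alpha> b \<and> 0 \<le> \<beta> b" by (simp add: \<alpha>_def \<beta>_def)
  qed
  have part1: "graph_reducible e (\<lambda>S. g (sum \<gamma> S))"
  proof -
    define r where "r = card (Q_a e \<gamma>)"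
    obtain \<phi> where \<phi>: "bij_betw \<phi> {0..<r} (Q_a e \<gamma>)"
      using ex_bij_betw_nat_finite[OF Qfin] unfolding r_def by blast
    define \<gamma>' where "\<gamma>' v = (if v \<in> e then \<gamma> v else 0)" for v
    define \<alpha>' where "\<alpha>' i = (if i \<in> {0..<r} then \<alpha> (\<phi> i) else 0)" for i
    define \<beta>' where "\<beta>' i = (if i \<in> {0..<r} then \<beta> (\<phi> i) else 0)" for i
    have \<phi>in: "\<And>i. i \<in> {0..<r} \<Longrightarrow> \<phi> i \<in> Q_a e \<gamma>" using \<phi> by (auto simp: bij_betw_def)
    have g'nn: "\<And>v. 0 \<le> \<gamma>' v" using gpos by (auto simp: \<gamma>'_def less_imp_le)
    have a'nn: "\<And>i. 0 \<le> \<alpha>' i" "\<And>i. 0 \<le> \<beta>' i" using nnab \<phi>in by (auto simp: \<alpha>'_def \<beta>'_def)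
    have Wnn: "\<forall>u v. 0 \<le> asymW \<gamma>' \<alpha>' \<beta>' u v"
    proof (intro allI)
      fix u v :: "'a + nat"
      show "0 \<le> asymW \<gamma>' \<alpha>' \<beta>' u v"
        using g'nn a'nn by (cases u; cases v) auto
    qed
    show ?thesis
      unfolding graph_reducible_def
    proof (intro exI[of _ "{0..<r}"] exI[of _ "asymW \<gamma>' \<alpha>' \<beta>'"] conjI)
      show "finite {0..<r}" by simp
      show "\<forall>u v. 0 \<le> asymW \<gamma>' \<alpha>' \<beta>' u v" by (rule Wnn)
      show "\<forall>S. S \<subseteq> e \<longrightarrow> g (sum \<gamma> S) = gadget_split e {0..<r} (asymW \<gamma>' \<alpha>' \<beta>') S"
      proof (intro allI impI)
      fix S assume S: "S \<subseteq> e"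
      have s1: "sum \<gamma>' S = sum \<gamma> S" using S by (intro sum.cong refl) (auto simp: \<gamma>'_def)
      have s2: "sum \<gamma>' (e - S) = sum \<gamma> (e - S)" by (intro sum.cong refl) (auto simp: \<gamma>'_def)
      have "gadget_split e {0..<r} (asymW \<gamma>' \<alpha>' \<beta>') S
          = (\<Sum>i\<in>{0..<r}. min (\<alpha>' i * sum \<gamma>' S) (\<beta>' i * sum \<gamma>' (e - S)))"
        by (rule asym_gadget[OF fin _ S]) simp
      also have "\<dots> = (\<Sum>i\<in>{0..<r}. min (\<alpha> (\<phi> i) * sum \<gamma> S) (\<beta> (\<phi> i) * sum \<gamma> (e - S)))"
        using s1 s2 by (intro sum.cong refl) (simp add: \<alpha>'_def \<beta>'_def)
      also have "\<dots> = (\<Sum>b\<in>Q_a e \<gamma>. min (\<alpha> b * sum \<gamma> S) (\<beta> b * sum \<gamma> (e - S)))"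
        by (rule sum.reindex_bij_betw[OF \<phi>])
      also have "\<dots> = g (sum \<gamma> S)" using key[OF S] by simp
      finally show "g (sum \<gamma> S) = gadget_split e {0..<r} (asymW \<gamma>' \<alpha>' \<beta>') S" by simp
      qed
    qed
  qed
  have part3: "(\<forall>x\<in>{0..sum \<gamma> e}. g x = g (sum \<gamma> e - x)) \<longrightarrow>
          (\<exists>a :: real \<Rightarrow> real. (\<forall>b\<in>Q_s e \<gamma>. 0 \<le> a b) \<and>
            (\<forall>S. S \<subseteq> e \<longrightarrow>
               g (sum \<gamma> S) = (\<Sum>b\<in>Q_s e \<gamma>. a b *
                   min (min (sum \<gamma> S) (sum \<gamma> (e - S))) b)) \<and>
            (\<forall>S. S \<subseteq> e \<longrightarrow>
               g (sum \<gamma> S) = gadget_split e (Q_s e \<gamma> \<times> UNIV) (sym_union_W \<gamma> a) S))"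
  proof
    assume sym: "\<forall>x\<in>{0..sum \<gamma> e}. g x = g (sum \<gamma> e - x)"
    obtain c where cnn: "\<forall>b\<in>Q_s e \<gamma>. 0 \<le> c b"
      and cid: "\<forall>S. S \<subseteq> e \<longrightarrow> g (sum \<gamma> S) = (\<Sum>b\<in>Q_s e \<gamma>. c b *
                   min (min (sum \<gamma> S) (sum \<gamma> (e - S))) b)"
      using part_s[OF fin gpos conc g0 sym] by blast
    have Qsfin: "finite (Q_s e \<gamma>)"
    proof -
      have "Q_s e \<gamma> \<subseteq> sum \<gamma> ` Pow e" unfolding Q_s_def by auto
      then show ?thesis by (rule finite_subset) (simp add: fin)
    qed
    show "\<exists>a :: real \<Rightarrow> real. (\<forall>b\<in>Q_s e \<gamma>. 0 \<le> a b) \<and>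
            (\<forall>S. S \<subseteq> e \<longrightarrow>
               g (sum \<gamma> S) = (\<Sum>b\<in>Q_s e \<gamma>. a b *
                   min (min (sum \<gamma> S) (sum \<gamma> (e - S))) b)) \<and>
            (\<forall>S. S \<subseteq> e \<longrightarrow>
               g (sum \<gamma> S) = gadget_split e (Q_s e \<gamma> \<times> UNIV) (sym_union_W \<gamma> a) S)"
    proof (intro exI[of _ c] conjI allI impI)
      fix S assume S: "S \<subseteq> e"
      show "g (sum \<gamma> S) = gadget_split e (Q_s e \<gamma> \<times> UNIV) (sym_union_W \<gamma> c) S"
        using sym_gadget[OF fin Qsfin S, of c \<gamma>] cnn gpos cid S by (auto simp: less_imp_le)
    qed (use cnn cid in auto)
  qed
  show ?thesis using part1 part2 part3 by blast
qed


end
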